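(* Let $\mathbb{F}$ be a field of characteristic not $2$, let $V$ be a $2$-dimensional $\mathbb{F}$-space with basis $u,v$ and symmetric bilinear form $B$ with $B(u,u)=B(v,v)=1$, $B(u,v)=\delta$, and let $\mathfrak{S}(\delta)=\mathbb{F}\oplus V$ with product $(\alpha+x)(\beta+y)=(\alpha\beta+B(x,y))+(\alpha y+\beta x)$. Put $a=\frac12(1+u)$ and $b=\frac12(1+v)$. Then: (a) $a$ and $b$ generate $\mathfrak{S}(\delta)$ if and only if $\delta\neq 1$; in this case $\mathfrak{S}(\delta)\cong\mathfrak{J}(\frac12(1+\delta))$ via an isomorphism sending the generators $\mathfrak{a},\mathfrak{b}$ of $\mathfrak{J}$ to $a,b$; (b) if $\delta=1$ then $\langle\langle a,b\rangle\rangle=\mathrm{span}\{a,b\}$ is a $2$-dimensional subalgebra isomorphic to $\mathfrak{J}(1)/\langle\sigma\rangle$ via an isomorphism sending the images of $\mathfrak{a},\mathfrak{b}$ to $a,b$.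
   Context: For $\alpha\in\mathbb{F}$, $\mathfrak{J}(\alpha)$ is the commutative algebra with basis $\mathfrak{a},\mathfrak{b},\sigma$ and product $\mathfrak{a}^2=\mathfrak{a}$, $\mathfrak{b}^2=\mathfrak{b}$, $\mathfrak{a}\mathfrak{b}=\frac12\mathfrak{a}+\frac12\mathfrak{b}+\sigma$, $\mathfrak{a}\sigma=\frac{\alpha-1}{2}\mathfrak{a}$, $\mathfrak{b}\sigma=\frac{\alpha-1}{2}\mathfrak{b}$, $\sigma^2=\frac{\alpha-1}{2}\sigma$. In $\mathfrak{J}(1)$, $\langle\sigma\rangle$ is an ideal (it annihilates the algebra). $\langle\langle a,b\rangle\rangle$ denotes the subalgebra generated by $a,b$. *)

theory Defs
  imports Main
begin

type_synonym 'a tri = "'a \<times> 'a \<times> 'a"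

definition tadd :: "'a::field tri \<Rightarrow> 'a tri \<Rightarrow> 'a tri" where
  "tadd x y = (case x of (x1,x2,x3) \<Rightarrow> case y of (y1,y2,y3) \<Rightarrow> (x1+y1, x2+y2, x3+y3))"

definition tsmul :: "'a::field \<Rightarrow> 'a tri \<Rightarrow> 'a tri" where
  "tsmul c x = (case x of (x1,x2,x3) \<Rightarrow> (c*x1, c*x2, c*x3))"

text \<open>An element (al, x1, x2) stands for al*1 + x1*u + x2*v.
  B is the symmetric bilinear form with B(u,u)=B(v,v)=1, B(u,v)=delta.\<close>

definition Bform :: "'a::field \<Rightarrow> 'a \<times> 'a \<Rightarrow> 'a \<times> 'a \<Rightarrow> 'a" where
  "Bform d x y = (case x of (x1,x2) \<Rightarrow> case y of (y1,y2) \<Rightarrow>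
      x1*y1 + x2*y2 + d*(x1*y2 + x2*y1))"

definition smul_S :: "'a::field \<Rightarrow> 'a tri \<Rightarrow> 'a tri \<Rightarrow> 'a tri" where
  "smul_S d p q = (case p of (al,x1,x2) \<Rightarrow> case q of (be,y1,y2) \<Rightarrow>
      (al*be + Bform d (x1,x2) (y1,y2), al*y1 + be*x1, al*y2 + be*x2))"

definition S_a :: "'a::field tri" where "S_a = (1/2, 1/2, 0)"
definition S_b :: "'a::field tri" where "S_b = (1/2, 0, 1/2)"

definition J_a :: "'a::field tri" where "J_a = (1,0,0)"
definition J_b :: "'a::field tri" where "J_b = (0,1,0)"
definition J_s :: "'a::field tri" where "J_s = (0,0,1)"

text \<open>Bilinear (commutative) extension of the basis products:
  aa = a, bb = b, ab = a/2 + b/2 + sigma, a sigma = (al-1)/2 a,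
  b sigma = (al-1)/2 b, sigma sigma = (al-1)/2 sigma.\<close>
definition jmul :: "'a::field \<Rightarrow> 'a tri \<Rightarrow> 'a tri \<Rightarrow> 'a tri" where
  "jmul al p q = (case p of (p1,p2,p3) \<Rightarrow> case q of (q1,q2,q3) \<Rightarrow>
     tadd (tsmul (p1*q1) J_a)
    (tadd (tsmul (p2*q2) J_b)
    (tadd (tsmul (p1*q2 + p2*q1) (tadd (tsmul (1/2) J_a) (tadd (tsmul (1/2) J_b) J_s)))
    (tadd (tsmul (p1*q3 + p3*q1) (tsmul ((al-1)/2) J_a))
    (tadd (tsmul (p2*q3 + p3*q2) (tsmul ((al-1)/2) J_b))
          (tsmul (p3*q3) (tsmul ((al-1)/2) J_s)))))))"

inductive_set gen_subalg :: "('a::field tri \<Rightarrow> 'a tri \<Rightarrow> 'a tri) \<Rightarrow> 'a tri \<Rightarrow> 'a tri \<Rightarrow> 'a tri set"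
  for mul x y where
  gen_x: "x \<in> gen_subalg mul x y"
| gen_y: "y \<in> gen_subalg mul x y"
| gen_add: "p \<in> gen_subalg mul x y \<Longrightarrow> q \<in> gen_subalg mul x y \<Longrightarrow> tadd p q \<in> gen_subalg mul x y"
| gen_smul: "p \<in> gen_subalg mul x y \<Longrightarrow> tsmul c p \<in> gen_subalg mul x y"
| gen_mul: "p \<in> gen_subalg mul x y \<Longrightarrow> q \<in> gen_subalg mul x y \<Longrightarrow> mul p q \<in> gen_subalg mul x y"

definition alg_iso ::
  "('b \<Rightarrow> 'c) \<Rightarrow> 'b set \<Rightarrow> ('b \<Rightarrow> 'b \<Rightarrow> 'b) \<Rightarrow> ('k \<Rightarrow> 'b \<Rightarrow> 'b) \<Rightarrow> ('b \<Rightarrow> 'b \<Rightarrow> 'b)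
   \<Rightarrow> 'c set \<Rightarrow> ('c \<Rightarrow> 'c \<Rightarrow> 'c) \<Rightarrow> ('k \<Rightarrow> 'c \<Rightarrow> 'c) \<Rightarrow> ('c \<Rightarrow> 'c \<Rightarrow> 'c) \<Rightarrow> bool" where
  "alg_iso f A addA smulA mulA C addC smulC mulC \<longleftrightarrow>
     bij_betw f A C \<and>
     (\<forall>x\<in>A. \<forall>y\<in>A. f (addA x y) = addC (f x) (f y)) \<and>
     (\<forall>c. \<forall>x\<in>A. f (smulA c x) = smulC c (f x)) \<and>
     (\<forall>x\<in>A. \<forall>y\<in>A. f (mulA x y) = mulC (f x) (f y))"

definition J_coset :: "'a::field tri \<Rightarrow> 'a tri set" where
  "J_coset x = {tadd x (tsmul t J_s) | t. True}"

definition Jq_carrier :: "'a::field tri set set" where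
  "Jq_carrier = range J_coset"

definition Jq_add :: "'a::field tri set \<Rightarrow> 'a tri set \<Rightarrow> 'a tri set" where
  "Jq_add X Y = J_coset (tadd (SOME x. x \<in> X) (SOME y. y \<in> Y))"

definition Jq_smul :: "'a::field \<Rightarrow> 'a tri set \<Rightarrow> 'a tri set" where
  "Jq_smul c X = J_coset (tsmul c (SOME x. x \<in> X))"

definition Jq_mul :: "'a::field tri set \<Rightarrow> 'a tri set \<Rightarrow> 'a tri set" where
  "Jq_mul X Y = J_coset (jmul 1 (SOME x. x \<in> X) (SOME y. y \<in> Y))"

end

theory Submission
  imports Defs
begin

lemma tadd_simp[simp]: "tadd (a,b,c) (x,y,z) = (a+x,b+y,c+z)"
  by (simp add: tadd_def)
lemma tsmul_simp[simp]: "tsmul k (a,b,c) = (k*a,k*b,k*c)"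
  by (simp add: tsmul_def)
lemma smulS_simp[simp]: "smul_S d (al,x1,x2) (be,y1,y2) =
   (al*be + (x1*y1 + x2*y2 + d*(x1*y2+x2*y1)), al*y1+be*x1, al*y2+be*x2)"
  by (simp add: smul_S_def Bform_def)
lemma jmul_simp[simp]: "jmul al (p1,p2,p3) (q1,q2,q3) =
   (p1*q1 + (p1*q2+p2*q1)/2 + (p1*q3+p3*q1)*((al-1)/2),
    p2*q2 + (p1*q2+p2*q1)/2 + (p2*q3+p3*q2)*((al-1)/2),
    (p1*q2+p2*q1) + p3*q3*((al-1)/2))"
  by (simp add: jmul_def J_a_def J_b_def J_s_def algebra_simps)

definition spanab :: "'a::field tri set" where
  "spanab = {tadd (tsmul s S_a) (tsmul t S_b) | s t. True}"

lemma spanab_char: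
  assumes "(2::'a::field) \<noteq> 0"
  shows "((al,x1,x2) \<in> (spanab :: 'a tri set)) \<longleftrightarrow> al = x1 + x2"
proof
  assume "(al,x1,x2) \<in> spanab"
  then show "al = x1 + x2" using assms by (auto simp: spanab_def S_a_def S_b_def)
next
  assume h: "al = x1 + x2"
  have "(al,x1,x2) = tadd (tsmul (2*x1) S_a) (tsmul (2*x2) S_b)"
    using assms h by (simp add: S_a_def S_b_def field_simps)
  then show "(al,x1,x2) \<in> spanab" unfolding spanab_def by blast
qed

lemma span_add: "(2::'a::field) \<noteq> 0 \<Longrightarrow> p \<in> (spanab::'a tri set) \<Longrightarrow> q \<in> spanab \<Longrightarrow> tadd p q \<in> spanab"
  using spanab_char[of "fst p"] spanab_char[of "fst q"] spanab_char[of "fst (tadd p q)"]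
  by (cases p; cases q) auto
lemma span_smul: "(2::'a::field) \<noteq> 0 \<Longrightarrow> p \<in> (spanab::'a tri set) \<Longrightarrow> tsmul c p \<in> spanab"
  using spanab_char[of "fst p"] spanab_char[of "fst (tsmul c p)"]
  by (cases p) (auto simp: algebra_simps)
lemma span_mul: "(2::'a::field) \<noteq> 0 \<Longrightarrow> p \<in> (spanab::'a tri set) \<Longrightarrow> q \<in> spanab \<Longrightarrow> smul_S 1 p q \<in> spanab"
  using spanab_char[of "fst p"] spanab_char[of "fst q"] spanab_char[of "fst (smul_S 1 p q)"]
  by (cases p; cases q) (auto simp: algebra_simps)

lemma gen_sub_span:
  assumes "(2::'a::field) \<noteq> 0"
  shows "p \<in> gen_subalg (smul_S 1) S_a S_b \<Longrightarrow> p \<in> (spanab :: 'a tri set)"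
proof (induction rule: gen_subalg.induct)
  case gen_x
  then show ?case using spanab_char[OF assms] by (simp add: S_a_def)
next
  case gen_y
  then show ?case using spanab_char[OF assms] by (simp add: S_b_def)
next
  case (gen_add p q)
  then show ?case using span_add[OF assms] by blast
next
  case (gen_smul p c)
  then show ?case using span_smul[OF assms] by blast
next
  case (gen_mul p q)
  then show ?case using span_mul[OF assms] by blast
qed

lemma span_sub_gen:
  "p \<in> spanab \<Longrightarrow> p \<in> gen_subalg mul S_a S_b"
  unfolding spanab_def
  by (auto intro: gen_subalg.intros)

lemma gen_eq_span:
  assumes "(2::'a::field) \<noteq> 0"
  shows "gen_subalg (smul_S 1) S_a S_b = (spanab :: 'a tri set)"
  using gen_sub_span[OF assms] span_sub_gen by blast

lemma gen_univ:
  fixes d :: "'a::field"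
  assumes "(2::'a) \<noteq> 0" "d \<noteq> 1"
  shows "gen_subalg (smul_S d) S_a S_b = UNIV"
proof -
  have "z \<in> gen_subalg (smul_S d) S_a S_b" for z
  proof -
    obtain al x1 x2 where z: "z = (al,x1,x2)" by (cases z) auto
    define c3 where "c3 = 4*(al-x1-x2)/(d-1)"
    have dd: "d - 1 \<noteq> 0" using assms by simp
    have "z = tadd (tsmul (2*x1 - c3/2) S_a) (tadd (tsmul (2*x2 - c3/2) S_b)
               (tsmul c3 (smul_S d S_a S_b)))"
    proof -
      have t2: "(2::'a) \<noteq> 0" using assms by simp
      have t4: "(4::'a) \<noteq> 0" using t2 by (metis mult_2 mult_eq_0_iff numeral_Bit0 one_add_one)
      have t16: "(16::'a) \<noteq> 0" using t4 by (metis mult_eq_0_iff num_double numeral_times_numeral)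
      have c: "c3 * (d-1) = 4*(al-x1-x2)" using dd unfolding c3_def by simp
      have e1: "(2*x1 - c3/2)/2 + (2*x2 - c3/2)/2 + c3*((1+d)/4) = al"
      proof -
        have f1: "(2*x1 - c3/2)/2 = x1 - c3/4" "(2*x2 - c3/2)/2 = x2 - c3/4"
          using t2 t4 by (simp_all add: field_simps)
        have f2: "c3*((1+d)/4) = c3/4 + c3/4 + c3*(d-1)/4"
          using t2 t4 t16 by (simp add: field_simps)
        have f3: "c3*(d-1)/4 = al - x1 - x2" using c t4 by simp
        show ?thesis unfolding f1 f2 f3 by (simp add: algebra_simps)
      qed
      have e2: "(2*x1 - c3/2)/2 + c3/4 = x1"
        using t2 t4 by (simp add: field_simps)
      have e3: "(2*x2 - c3/2)/2 + c3/4 = x2"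
        using t2 t4 by (simp add: field_simps)
      have ab: "smul_S d S_a S_b = ((1+d)/4, 1/4, 1/4)"
        using t2 t4 by (simp add: S_a_def S_b_def field_simps)
      have r: "tadd (tsmul (2*x1 - c3/2) S_a) (tadd (tsmul (2*x2 - c3/2) S_b)
               (tsmul c3 (smul_S d S_a S_b))) =
          ((2*x1 - c3/2)*(1/2) + ((2*x2 - c3/2)*(1/2) + c3*((1+d)/4)),
           (2*x1 - c3/2)*(1/2) + ((2*x2 - c3/2)*0 + c3*(1/4)),
           (2*x1 - c3/2)*0 + ((2*x2 - c3/2)*(1/2) + c3*(1/4)))"
        unfolding ab by (simp only: S_a_def S_b_def tadd_simp tsmul_simp)
      show ?thesis unfolding z r using e1 e2 e3
        by (simp add: add.assoc)
    qed
    then show ?thesis by (auto intro!: gen_subalg.intros)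
  qed
  then show ?thesis by blast
qed

lemma pow2_nz:
  assumes "(2::'a::field) \<noteq> 0"
  shows "(4::'a) \<noteq> 0" "(8::'a) \<noteq> 0" "(16::'a) \<noteq> 0" "(32::'a) \<noteq> 0"
        "(64::'a) \<noteq> 0" "(128::'a) \<noteq> 0" "(256::'a) \<noteq> 0"
proof -
  have "(2::'a)^n \<noteq> 0" for n using assms by simp
  from this[of 2] this[of 3] this[of 4] this[of 5] this[of 6] this[of 7] this[of 8]
  show "(4::'a) \<noteq> 0" "(8::'a) \<noteq> 0" "(16::'a) \<noteq> 0" "(32::'a) \<noteq> 0"
        "(64::'a) \<noteq> 0" "(128::'a) \<noteq> 0" "(256::'a) \<noteq> 0" by simp_all
qed

definition isoS :: "'a::field \<Rightarrow> 'a tri \<Rightarrow> 'a tri" where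
  "isoS d = (\<lambda>(p1,p2,p3). (p1/2 + p2/2 + p3*((d-1)/4), p1/2, p2/2))"

lemma isoS_iso:
  fixes d :: "'a::field"
  assumes t2: "(2::'a) \<noteq> 0" and dd: "d \<noteq> 1"
  shows "alg_iso (isoS d) UNIV tadd tsmul (jmul ((1 + d)/2)) UNIV tadd tsmul (smul_S d)
     \<and> isoS d J_a = S_a \<and> isoS d J_b = S_b"
proof -
  note nz = pow2_nz[OF t2]
  have d1: "d - 1 \<noteq> 0" using dd by simp
  have d8: "(8 + d*(d*8) - d*16) \<noteq> (0::'a)"
  proof -
    have "(8 + d*(d*8) - d*16) = (8::'a)*((d-1)*(d-1))" by (simp add: algebra_simps)
    then show ?thesis using nz d1 by simp
  qed
  define g where "g = (\<lambda>(al::'a,x1::'a,x2::'a). (2*x1, 2*x2, 4*(al-x1-x2)/(d-1)))"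
  have b: "bij_betw (isoS d) UNIV UNIV"
  proof (rule bij_betw_byWitness[where f'=g])
    show "\<forall>a\<in>UNIV. g (isoS d a) = a"
      using t2 nz d1 d8 by (auto simp: g_def isoS_def field_simps)
    show "\<forall>a\<in>UNIV. isoS d (g a) = a"
      using t2 nz d1 d8 by (auto simp: g_def isoS_def field_simps)
  qed auto
  define h where "h = (1::'a)/2"
  have h2: "2*h = 1" using t2 by (simp add: h_def)
  have div2: "x/2 = x*h" for x :: 'a by (simp add: h_def)
  have div4: "x/4 = x*h*h" for x :: 'a using t2 by (simp add: h_def)
  have m: "isoS d (jmul ((1 + d)/2) p q) = smul_S d (isoS d p) (isoS d q)" for p q
  proof -
    obtain a b c where p: "p = (a,b,c)" by (cases p) auto
    obtain aa ba ca where q: "q = (aa,ba,ca)" by (cases q) auto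
    show ?thesis unfolding p q
      apply (simp only: isoS_def jmul_simp smulS_simp prod.case div2 div4 prod.inject)
      apply (intro conjI)
      using h2 by algebra+
  qed
  have a: "isoS d (tadd p q) = tadd (isoS d p) (isoS d q)" for p q
    using t2 nz by (cases p; cases q) (auto simp: isoS_def field_simps)
  have s: "isoS d (tsmul c p) = tsmul c (isoS d p)" for c p
    using t2 nz by (cases p) (auto simp: isoS_def field_simps)
  show ?thesis using b m a s
    by (simp add: alg_iso_def isoS_def J_a_def J_b_def S_a_def S_b_def)
qed

lemma coset_mem: "(z::'a::field tri) \<in> J_coset y \<longleftrightarrow> fst z = fst y \<and> fst (snd z) = fst (snd y)"
proof -
  obtain z1 z2 z3 where z: "z = (z1,z2,z3)" by (cases z) auto
  obtain y1 y2 y3 where y: "y = (y1,y2,y3)" by (cases y) auto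
  show ?thesis unfolding z y J_coset_def J_s_def
    by (auto intro: exI[where x="z3 - y3"])
qed

lemma some_coset: "fst (SOME z. z \<in> J_coset y) = fst (y::'a::field tri)
   \<and> fst (snd (SOME z. z \<in> J_coset y)) = fst (snd y)"
proof -
  have "y \<in> J_coset y" by (simp add: coset_mem)
  then have "(SOME z. z \<in> J_coset y) \<in> J_coset y" by (rule someI)
  then show ?thesis by (simp add: coset_mem)
qed

lemma coset_eq: "J_coset x = J_coset (y::'a::field tri) \<longleftrightarrow> fst x = fst y \<and> fst (snd x) = fst (snd y)"
proof
  assume "J_coset x = J_coset y"
  moreover have "x \<in> J_coset x" by (simp add: coset_mem)
  ultimately show "fst x = fst y \<and> fst (snd x) = fst (snd y)" by (simp add: coset_mem)
next
  assume "fst x = fst y \<and> fst (snd x) = fst (snd y)"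
  then show "J_coset x = J_coset y" by (auto simp: coset_mem)
qed

definition hq :: "'a::field tri \<Rightarrow> 'a tri" where
  "hq p = tadd (tsmul (fst p) S_a) (tsmul (fst (snd p)) S_b)"

definition Fq :: "'a::field tri set \<Rightarrow> 'a tri" where
  "Fq X = hq (SOME x. x \<in> X)"

lemma hq_cong: "fst x = fst y \<Longrightarrow> fst (snd x) = fst (snd y) \<Longrightarrow> hq x = hq y"
  by (simp add: hq_def)

lemma Fq_coset: "Fq (J_coset y) = hq y"
  unfolding Fq_def using some_coset[of y] hq_cong by metis

lemma hq_simp: "hq (a,b,c) = (a/2 + b/2, a/2, (b::'a::field)/2)"
  by (simp add: hq_def S_a_def S_b_def)

lemma hq_inj: "(2::'a::field) \<noteq> 0 \<Longrightarrow> hq (x::'a tri) = hq y \<Longrightarrow> fst x = fst y \<and> fst (snd x) = fst (snd y)"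
  by (cases x; cases y) (simp add: hq_simp)

lemma hq_span: "hq ` UNIV = spanab"
  unfolding spanab_def hq_def
  by (auto intro!: image_eqI[where x="(s,t,0)" for s t])

lemma quot_iso:
  fixes dummy :: "'a::field"
  assumes t2: "(2::'a) \<noteq> 0"
  shows "alg_iso (Fq :: 'a tri set \<Rightarrow> 'a tri) Jq_carrier Jq_add Jq_smul Jq_mul
                 spanab tadd tsmul (smul_S 1)
              \<and> Fq (J_coset J_a) = (S_a :: 'a tri) \<and> Fq (J_coset J_b) = (S_b :: 'a tri)"
proof -
  have inj: "inj_on (Fq :: 'a tri set \<Rightarrow> 'a tri) Jq_carrier"
    unfolding Jq_carrier_def inj_on_def
    using hq_inj[OF t2] coset_eq Fq_coset by (smt (verit) imageE)
  have img: "Fq ` Jq_carrier = (spanab :: 'a tri set)"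
    unfolding Jq_carrier_def using hq_span by (simp add: image_comp comp_def Fq_coset)
  have hadd: "hq (tadd x y) = tadd (hq x) (hq (y::'a tri))" for x y
    by (cases x; cases y) (simp add: hq_simp add_divide_distrib)
  have hsm: "hq (tsmul c x) = tsmul c (hq (x::'a tri))" for c x
    by (cases x) (simp add: hq_simp algebra_simps)
  have hmul: "hq (jmul 1 x y) = smul_S 1 (hq x) (hq (y::'a tri))" for x y
  proof -
    define h where "h = (1::'a)/2"
    have h2: "2*h = 1" using t2 by (simp add: h_def)
    have div2: "x/2 = x*h" for x :: 'a by (simp add: h_def)
    obtain a b c where p: "x = (a,b,c)" by (cases x) auto
    obtain aa ba ca where q: "y = (aa,ba,ca)" by (cases y) auto
    show ?thesis unfolding p q
      apply (simp only: hq_simp jmul_simp smulS_simp div2 prod.inject)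
      apply (intro conjI)
      using h2 by algebra+
  qed
  have sx: "(SOME z. z \<in> J_coset x) \<in> J_coset x" for x :: "'a tri"
    by (rule someI[of _ x]) (simp add: coset_mem)
  have hs: "hq (SOME z. z \<in> J_coset x) = hq x" for x :: "'a tri"
    using some_coset[of x] by (intro hq_cong) auto
  have A: "Fq (Jq_add X Y) = tadd (Fq X) (Fq Y)" if hXY: "X \<in> Jq_carrier" "Y \<in> Jq_carrier" for X Y :: "'a tri set"
  proof -
    obtain x y where XY: "X = J_coset x" "Y = J_coset y" using hXY unfolding Jq_carrier_def by blast
    show ?thesis unfolding XY Jq_add_def Fq_coset by (simp only: hadd hs)
  qed
  have S: "Fq (Jq_smul c X) = tsmul c (Fq X)" if hXY: "X \<in> Jq_carrier" for c and X :: "'a tri set"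
  proof -
    obtain x where XY: "X = J_coset x" using hXY unfolding Jq_carrier_def by blast
    show ?thesis unfolding XY Jq_smul_def Fq_coset by (simp only: hsm hs)
  qed
  have M: "Fq (Jq_mul X Y) = smul_S 1 (Fq X) (Fq Y)" if hXY: "X \<in> Jq_carrier" "Y \<in> Jq_carrier" for X Y :: "'a tri set"
  proof -
    obtain x y where XY: "X = J_coset x" "Y = J_coset y" using hXY unfolding Jq_carrier_def by blast
    show ?thesis unfolding XY Jq_mul_def Fq_coset by (simp only: hmul hs)
  qed
  show ?thesis
    using inj img A S M
    by (auto simp: alg_iso_def bij_betw_def Fq_coset hq_def J_a_def J_b_def S_a_def S_b_def)
qed

theorem proposition3p4:
  fixes d :: "'a::field"
  assumes char: "(2::'a) \<noteq> 0"
  shows "(gen_subalg (smul_S d) S_a S_b = UNIV \<longleftrightarrow> d \<noteq> 1)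
    \<and> (d \<noteq> 1 \<longrightarrow> (\<exists>f. alg_iso f UNIV tadd tsmul (jmul ((1 + d)/2))
                              UNIV tadd tsmul (smul_S d)
                         \<and> f J_a = S_a \<and> f J_b = S_b))
    \<and> (d = 1 \<longrightarrow>
         gen_subalg (smul_S d) S_a S_b = {tadd (tsmul s S_a) (tsmul t S_b) | s t. True}
       \<and> (\<forall>s t :: 'a. tadd (tsmul s S_a) (tsmul t S_b) = (0,0,0) \<longrightarrow> s = 0 \<and> t = 0)
       \<and> (\<exists>f. alg_iso f Jq_carrier Jq_add Jq_smul Jq_mul
                 (gen_subalg (smul_S d) S_a S_b) tadd tsmul (smul_S d)
              \<and> f (J_coset J_a) = S_a \<and> f (J_coset J_b) = S_b))"
proof -
  have g1: "gen_subalg (smul_S 1) S_a S_b \<noteq> (UNIV :: 'a tri set)"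
  proof
    assume "gen_subalg (smul_S 1) S_a S_b = (UNIV :: 'a tri set)"
    then have "((1::'a),(0::'a),(0::'a)) \<in> spanab" using gen_eq_span[OF char] by simp
    then show False using spanab_char[OF char] by simp
  qed
  have P1: "gen_subalg (smul_S d) S_a S_b = UNIV \<longleftrightarrow> d \<noteq> 1"
    using g1 gen_univ[OF char] by blast
  have P2: "d \<noteq> 1 \<longrightarrow> (\<exists>f. alg_iso f UNIV tadd tsmul (jmul ((1 + d)/2))
                              UNIV tadd tsmul (smul_S d)
                         \<and> f J_a = S_a \<and> f J_b = S_b)"
    using isoS_iso[OF char] by blast
  have ind: "\<forall>s t :: 'a. tadd (tsmul s S_a) (tsmul t S_b) = (0,0,0) \<longrightarrow> s = 0 \<and> t = 0"
    using char by (simp add: S_a_def S_b_def)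
  have P3: "d = 1 \<longrightarrow>
         gen_subalg (smul_S d) S_a S_b = {tadd (tsmul s S_a) (tsmul t S_b) | s t. True}
       \<and> (\<forall>s t :: 'a. tadd (tsmul s S_a) (tsmul t S_b) = (0,0,0) \<longrightarrow> s = 0 \<and> t = 0)
       \<and> (\<exists>f. alg_iso f Jq_carrier Jq_add Jq_smul Jq_mul
                 (gen_subalg (smul_S d) S_a S_b) tadd tsmul (smul_S d)
              \<and> f (J_coset J_a) = S_a \<and> f (J_coset J_b) = S_b)"
  proof
    assume "d = 1"
    then show "gen_subalg (smul_S d) S_a S_b = {tadd (tsmul s S_a) (tsmul t S_b) | s t. True}
       \<and> (\<forall>s t :: 'a. tadd (tsmul s S_a) (tsmul t S_b) = (0,0,0) \<longrightarrow> s = 0 \<and> t = 0)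
       \<and> (\<exists>f. alg_iso f Jq_carrier Jq_add Jq_smul Jq_mul
                 (gen_subalg (smul_S d) S_a S_b) tadd tsmul (smul_S d)
              \<and> f (J_coset J_a) = S_a \<and> f (J_coset J_b) = S_b)"
      using gen_eq_span[OF char] quot_iso[OF char] ind unfolding spanab_def by auto
  qed
  show ?thesis using P1 P2 P3 by blast
qed

end
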